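(* Let $0<\alpha<d$, $\beta\in\mathbb{R}$, $\mathcal{B}_\alpha\in\{\mathcal{B}^c_\alpha,\mathcal{B}^u_\alpha\}$, $1\leq p<d/(1+\alpha+\beta)$ (so $1+\alpha+\beta>0$), $f\in L^p(\mathbb{R}^d)$, and $\varepsilon>0$. Then for any $c_1\geq2$, $c_2\geq1$ there is a set of balls $\widetilde{\mathcal{B}}\subset\mathcal{B}_\alpha$ such that for any two distinct balls $B,A\in\widetilde{\mathcal{B}}$ we have $c_1B\cap c_1A=\emptyset$ or $f_A/f_B\notin(c_2^{-1},c_2)$, and furthermore, writing $q=(p^{-1}-(1+\alpha+\beta)/d)^{-1}$, \[ \int_\varepsilon^\infty\lambda^{q-1}\Bigl|\bigcup\bigl\{B\in\mathcal{B}_\alpha:r(B)^{\alpha+\beta}f_B>\lambda\bigr\}\Bigr|\,d\lambda\leq C\biggl(\sum_{B\in\widetilde{\mathcal{B}}}\bigl(r(B)^{\frac dp-1}f_B\bigr)^p\biggr)^{(1-p(1+\alpha+\beta)/d)^{-1}}, \] where $C$ depends only on $d,\alpha,\beta,p,c_1,c_2$.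
   Context: $f_B=\frac1{|B|}\int_B|f|$, $r(B)$ is the radius of the ball $B$, $cB$ is the ball with the same center and radius $c\,r(B)$, $\overline B$ its closure. $\mathrm{M}^c_\alpha f(x)=\sup_{r>0}r^\alpha f_{B(x,r)}$, $\mathrm{M}^u_\alpha f(x)=\sup_{B\ni x}r(B)^\alpha f_B$ over balls containing $x$. $\mathcal{B}^c_\alpha(x)=\{B(x,r)\}$ with $r$ the largest radius with $\mathrm{M}^c_\alpha f(x)=r^\alpha f_{B(x,r)}$ (empty if none exists); $\mathcal{B}^u_\alpha(x)$ is the set of balls $B$ with $x\in\overline B$, $r(B)^\alpha f_B=\mathrm{M}^u_\alpha f(x)$ and $r(A)^\alpha f_A<\mathrm{M}^u_\alpha f(x)$ for every ball $A\supsetneq B$. $\mathcal{B}^c_\alpha=\bigcup_{x}\mathcal{B}^c_\alpha(x)$, $\mathcal{B}^u_\alpha=\bigcup_x\mathcal{B}^u_\alpha(x)$. *)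

theory Defs
  imports "HOL-Analysis.Analysis"
begin

text \<open>Balls are represented by pairs (centre, radius) with radius > 0;
  the pair (x,r) stands for the open ball ball x r.\<close>

definition avg :: "('a::euclidean_space \<Rightarrow> real) \<Rightarrow> 'a \<Rightarrow> real \<Rightarrow> real" where
  "avg f x r = (LINT y:ball x r|lebesgue. \<bar>f y\<bar>) / measure lebesgue (ball x r)"

definition Mc :: "real \<Rightarrow> ('a::euclidean_space \<Rightarrow> real) \<Rightarrow> 'a \<Rightarrow> ereal" where
  "Mc \<alpha> f x = (SUP r\<in>{0<..}. ereal (r powr \<alpha> * avg f x r))"

definition Mu :: "real \<Rightarrow> ('a::euclidean_space \<Rightarrow> real) \<Rightarrow> 'a \<Rightarrow> ereal" where
  "Mu \<alpha> f x = (SUP yr\<in>{(y,r). 0 < r \<and> x \<in> ball y r}. ereal (snd yr powr \<alpha> * avg f (fst yr) (snd yr)))"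

definition Bc_at :: "real \<Rightarrow> ('a::euclidean_space \<Rightarrow> real) \<Rightarrow> 'a \<Rightarrow> ('a \<times> real) set" where
  "Bc_at \<alpha> f x = {(x, r) | r. 0 < r \<and> ereal (r powr \<alpha> * avg f x r) = Mc \<alpha> f x \<and>
      (\<forall>s>r. ereal (s powr \<alpha> * avg f x s) \<noteq> Mc \<alpha> f x)}"

definition Bu_at :: "real \<Rightarrow> ('a::euclidean_space \<Rightarrow> real) \<Rightarrow> 'a \<Rightarrow> ('a \<times> real) set" where
  "Bu_at \<alpha> f x = {(y, r). 0 < r \<and> x \<in> cball y r \<and> ereal (r powr \<alpha> * avg f y r) = Mu \<alpha> f x \<and>
      (\<forall>z s. 0 < s \<and> ball y r \<subset> ball z s \<longrightarrow> ereal (s powr \<alpha> * avg f z s) < Mu \<alpha> f x)}"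

definition Bc :: "real \<Rightarrow> ('a::euclidean_space \<Rightarrow> real) \<Rightarrow> ('a \<times> real) set" where
  "Bc \<alpha> f = (\<Union>x. Bc_at \<alpha> f x)"

definition Bu :: "real \<Rightarrow> ('a::euclidean_space \<Rightarrow> real) \<Rightarrow> ('a \<times> real) set" where
  "Bu \<alpha> f = (\<Union>x. Bu_at \<alpha> f x)"

end

theory Submission
  imports Defs
begin


lemma select_family:
  fixes F :: "'b set" and \<rho> :: "'b \<Rightarrow> real" and conf :: "'b \<Rightarrow> 'b \<Rightarrow> bool"
  assumes pos: "\<And>b. b \<in> F \<Longrightarrow> 0 < \<rho> b" and bnd: "\<And>b. b \<in> F \<Longrightarrow> \<rho> b \<le> R"
    and sym: "\<And>b b'. b \<in> F \<Longrightarrow> b' \<in> F \<Longrightarrow> conf b b' = conf b' b"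
  shows "\<exists>G\<subseteq>F. (\<forall>g\<in>G. \<forall>g'\<in>G. g \<noteq> g' \<longrightarrow> \<not> conf g g') \<and>
           (\<forall>b\<in>F. \<exists>g\<in>G. (g = b \<or> conf b g) \<and> \<rho> b \<le> 2 * \<rho> g)"
proof -
  define P where "P G \<longleftrightarrow> (\<forall>b\<in>F. (\<exists>g\<in>G. conf b g) \<longrightarrow> (\<exists>g\<in>G. conf b g \<and> \<rho> b \<le> 2 * \<rho> g))" for G
  define A where "A = {G. G \<subseteq> F \<and> (\<forall>g\<in>G. \<forall>g'\<in>G. g \<noteq> g' \<longrightarrow> \<not> conf g g') \<and> P G}"
  have "\<forall>C\<in>chains A. \<Union>C \<in> A"
  proof
    fix C assume C: "C \<in> chains A"
    have sub: "C \<subseteq> A" and ch: "\<And>X Y. X \<in> C \<Longrightarrow> Y \<in> C \<Longrightarrow> X \<subseteq> Y \<or> Y \<subseteq> X"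
      using C unfolding chains_def chain_subset_def by auto
    have "\<Union>C \<subseteq> F" using sub A_def by auto
    moreover have "\<forall>g\<in>\<Union>C. \<forall>g'\<in>\<Union>C. g \<noteq> g' \<longrightarrow> \<not> conf g g'"
    proof (intro ballI impI)
      fix g g' assume "g \<in> \<Union>C" "g' \<in> \<Union>C" "g \<noteq> g'"
      then obtain X Y where XY: "X \<in> C" "Y \<in> C" "g \<in> X" "g' \<in> Y" by auto
      show "\<not> conf g g'"
      proof (cases "X \<subseteq> Y")
        case True thus ?thesis using XY sub \<open>g \<noteq> g'\<close> unfolding A_def by blast
      next
        case False hence "Y \<subseteq> X" using ch XY by blast
        thus ?thesis using XY sub \<open>g \<noteq> g'\<close> unfolding A_def by blast
      qed
    qed
    moreover have "P (\<Union>C)"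
      unfolding P_def
    proof (intro ballI impI)
      fix b assume "b \<in> F" "\<exists>g\<in>\<Union>C. conf b g"
      then obtain X g where "X \<in> C" "g \<in> X" "conf b g" by auto
      hence "P X" using sub A_def by auto
      then obtain g' where "g' \<in> X" "conf b g'" "\<rho> b \<le> 2 * \<rho> g'"
        using \<open>b \<in> F\<close> \<open>g \<in> X\<close> \<open>conf b g\<close> unfolding P_def by blast
      thus "\<exists>g\<in>\<Union>C. conf b g \<and> \<rho> b \<le> 2 * \<rho> g" using \<open>X \<in> C\<close> by blast
    qed
    ultimately show "\<Union>C \<in> A" unfolding A_def by blast
  qed
  from Zorn_Lemma[OF this] obtain G where GA: "G \<in> A" and maxG0: "\<forall>X\<in>A. G \<subseteq> X \<longrightarrow> X = G"
    by blast
  have maxG: "\<And>X. X \<in> A \<Longrightarrow> G \<subseteq> X \<Longrightarrow> X = G" using maxG0 by blast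
  have GF: "G \<subseteq> F" and Gp: "\<forall>g\<in>G. \<forall>g'\<in>G. g \<noteq> g' \<longrightarrow> \<not> conf g g'" and PG: "P G"
    using GA A_def by auto
  define U where "U = {b\<in>F. \<not> (\<exists>g\<in>G. (g = b \<or> conf b g) \<and> \<rho> b \<le> 2 * \<rho> g)}"
  have "U = {}"
  proof (rule ccontr)
    assume "U \<noteq> {}"
    have bddU: "bdd_above (\<rho> ` U)" by (rule bdd_aboveI2[where M=R]) (use bnd U_def in auto)
    have "Sup (\<rho> ` U) > 0"
    proof -
      obtain u where "u \<in> U" using \<open>U \<noteq> {}\<close> by auto
      hence "\<rho> u \<le> Sup (\<rho> ` U)" using bddU by (simp add: cSUP_upper)
      moreover have "\<rho> u > 0" using \<open>u \<in> U\<close> pos U_def by auto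
      ultimately show ?thesis by linarith
    qed
    hence "Sup (\<rho> ` U) / 2 < Sup (\<rho> ` U)" by simp
    then obtain b where bU: "b \<in> U" and bbig: "Sup (\<rho> ` U) / 2 < \<rho> b"
      using less_cSUP_iff[OF \<open>U \<noteq> {}\<close> bddU] by blast
    have bF: "b \<in> F" using bU U_def by auto
    have bnG: "b \<notin> G"
    proof
      assume "b \<in> G"
      moreover have "\<rho> b \<le> 2 * \<rho> b" using pos[OF bF] by simp
      ultimately show False using bU U_def by auto
    qed
    have noconf: "\<not> conf b g" if gG0: "g \<in> G" for g
    proof
      assume "conf b g"
      then obtain g' where "g' \<in> G" "conf b g'" "\<rho> b \<le> 2 * \<rho> g'"
        using PG bF gG0 unfolding P_def by blast
      thus False using bU U_def by auto
    qed
    define G' where "G' = insert b G"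
    have "G' \<in> A"
      unfolding A_def
    proof (intro CollectI conjI)
      show "G' \<subseteq> F" using GF bF G'_def by auto
      show "\<forall>g\<in>G'. \<forall>g'\<in>G'. g \<noteq> g' \<longrightarrow> \<not> conf g g'"
      proof (intro ballI impI)
        fix g g' assume g: "g \<in> G'" and g': "g' \<in> G'" and ne: "g \<noteq> g'"
        show "\<not> conf g g'"
        proof (cases "g = b")
          case True
          hence "g' \<in> G" using g' ne G'_def by auto
          thus ?thesis using noconf True by auto
        next
          case False
          hence gG: "g \<in> G" using g G'_def by auto
          show ?thesis
          proof (cases "g' = b")
            case True
            thus ?thesis using noconf[OF gG] sym[of g b] gG GF bF by auto
          next
            case False
            thus ?thesis using gG g' Gp ne G'_def by auto
          qed
        qed
      qed
      show "P G'"
        unfolding P_def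
      proof (intro ballI impI)
        fix b' assume b'F: "b' \<in> F" and ex: "\<exists>g\<in>G'. conf b' g"
        show "\<exists>g\<in>G'. conf b' g \<and> \<rho> b' \<le> 2 * \<rho> g"
        proof (cases "\<exists>g\<in>G. conf b' g")
          case True
          then show ?thesis using PG b'F unfolding P_def G'_def by blast
        next
          case False
          hence cb: "conf b' b" using ex G'_def by auto
          have "b' \<notin> G"
          proof
            assume "b' \<in> G"
            hence "\<not> conf b b'" using noconf by auto
            thus False using cb sym b'F bF by auto
          qed
          hence "b' \<in> U" using False b'F unfolding U_def by auto
          hence "\<rho> b' \<le> Sup (\<rho> ` U)" using bddU by (simp add: cSUP_upper)
          hence "\<rho> b' \<le> 2 * \<rho> b" using bbig by linarith
          thus ?thesis using cb G'_def by auto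
        qed
      qed
    qed
    moreover have "G \<subseteq> G'" using G'_def by auto
    ultimately have "G' = G" using maxG by blast
    thus False using bnG G'_def by auto
  qed
  have cov: "\<forall>b\<in>F. \<exists>g\<in>G. (g = b \<or> conf b g) \<and> \<rho> b \<le> 2 * \<rho> g"
  proof (intro ballI)
    fix b assume bF: "b \<in> F"
    hence "b \<notin> U" using \<open>U = {}\<close> by simp
    thus "\<exists>g\<in>G. (g = b \<or> conf b g) \<and> \<rho> b \<le> 2 * \<rho> g" using bF unfolding U_def by blast
  qed
  show ?thesis by (rule exI[of _ G]) (use GF Gp cov in blast)
qed
lemma maxprop:
  fixes f :: "'a::euclidean_space \<Rightarrow> real"
  assumes "b \<in> Bc \<alpha> f \<or> b \<in> Bu \<alpha> f" "snd b < s"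
  shows "0 < snd b" "s powr \<alpha> * avg f (fst b) s \<le> snd b powr \<alpha> * avg f (fst b) (snd b)"
proof -
  obtain y r where b: "b = (y, r)" by (cases b)
  have "0 < r \<and> s powr \<alpha> * avg f y s \<le> r powr \<alpha> * avg f y r"
    using assms(1)
  proof
    assume "b \<in> Bc \<alpha> f"
    then obtain x where "(y, r) \<in> Bc_at \<alpha> f x" using b unfolding Bc_def by auto
    hence yx: "y = x" and r: "0 < r" and eq: "ereal (r powr \<alpha> * avg f y r) = Mc \<alpha> f x"
      unfolding Bc_at_def by auto
    have "ereal (s powr \<alpha> * avg f x s) \<le> Mc \<alpha> f x"
      unfolding Mc_def using r assms(2) b by (intro SUP_upper) auto
    hence "ereal (s powr \<alpha> * avg f x s) \<le> ereal (r powr \<alpha> * avg f x r)" using eq yx by simp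
    thus ?thesis using yx r by simp
  next
    assume "b \<in> Bu \<alpha> f"
    then obtain x where "(y, r) \<in> Bu_at \<alpha> f x" using b unfolding Bu_def by auto
    hence r: "0 < r" and eq: "ereal (r powr \<alpha> * avg f y r) = Mu \<alpha> f x"
      and mx: "\<And>z s. 0 < s \<Longrightarrow> ball y r \<subset> ball z s \<Longrightarrow> ereal (s powr \<alpha> * avg f z s) < Mu \<alpha> f x"
      unfolding Bu_at_def by auto
    have rs: "r < s" using assms(2) b by simp
    have "ball y r \<subset> ball y s"
    proof
      show "ball y r \<subseteq> ball y s" using rs by (intro subset_ball) simp
      show "ball y r \<noteq> ball y s" using rs r by (simp add: ball_eq_ball_iff)
    qed
    hence "ereal (s powr \<alpha> * avg f y s) < Mu \<alpha> f x" using mx r rs by simp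
    hence "ereal (s powr \<alpha> * avg f y s) < ereal (r powr \<alpha> * avg f y r)" using eq by simp
    thus ?thesis using r by simp
  qed
  thus "0 < snd b" "s powr \<alpha> * avg f (fst b) s \<le> snd b powr \<alpha> * avg f (fst b) (snd b)"
    using b by auto
qed

lemma ptwise:
  fixes \<tau> p x :: real
  assumes "0 < \<tau>" "1 \<le> p" "0 \<le> x"
  shows "x \<le> \<tau> + \<tau> powr (1 - p) * x powr p"
proof (cases "x \<le> \<tau>")
  case True
  have "0 \<le> \<tau> powr (1 - p) * x powr p" by simp
  thus ?thesis using True by linarith
next
  case False
  hence x: "\<tau> < x" by simp
  have "x powr p = x * x powr (p - 1)"
    using x assms by (simp add: powr_diff) 
  also have "\<dots> \<ge> x * \<tau> powr (p - 1)"
    using x assms by (intro mult_left_mono powr_mono2) auto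
  finally have "\<tau> powr (1 - p) * x powr p \<ge> \<tau> powr (1 - p) * (x * \<tau> powr (p - 1))"
    by (intro mult_left_mono) auto
  also have "\<tau> powr (1 - p) * (x * \<tau> powr (p - 1)) = x * (\<tau> powr (1 - p) * \<tau> powr (p - 1))" by simp
  also have "\<tau> powr (1 - p) * \<tau> powr (p - 1) = 1" using assms by (simp add: powr_add[symmetric])
  finally have "x \<le> \<tau> powr (1 - p) * x powr p" by simp
  thus ?thesis using assms by linarith
qed

lemma abs_le_powr:
  fixes p x :: real
  assumes "1 \<le> p"
  shows "\<bar>x\<bar> \<le> 1 + \<bar>x\<bar> powr p"
  using ptwise[of 1 p "\<bar>x\<bar>"] assms by simp

context
  fixes f :: "'a::euclidean_space \<Rightarrow> real" and p :: real
  assumes fm: "f \<in> borel_measurable lebesgue" and fi: "integrable lebesgue (\<lambda>x. \<bar>f x\<bar> powr p)"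
    and p1: "1 \<le> p"
begin

lemma integrable_ball: "integrable lebesgue (\<lambda>x. indicator (ball y r) x * \<bar>f x\<bar>)"
proof (rule Bochner_Integration.integrable_bound)
  show "integrable lebesgue (\<lambda>x. indicator (ball y r) x + \<bar>f x\<bar> powr p)"
  proof (intro Bochner_Integration.integrable_add fi integrable_real_indicator)
    have "emeasure lborel (ball y r) < \<infinity>" by (rule emeasure_bounded_finite) simp
    thus "emeasure lebesgue (ball y r) < \<infinity>" by simp
  qed simp
  show "(\<lambda>x. indicator (ball y r) x * \<bar>f x\<bar>) \<in> borel_measurable lebesgue"
  proof -
    have "ball y r \<in> sets lebesgue" using lmeasurable_ball by (rule fmeasurableD)
    thus ?thesis using fm by (intro borel_measurable_times borel_measurable_indicator borel_measurable_abs)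
  qed
  show "AE x in lebesgue. norm (indicator (ball y r) x * \<bar>f x\<bar>) \<le> norm (indicator (ball y r) x + \<bar>f x\<bar> powr p)"
    using abs_le_powr[OF p1] by (auto simp: indicator_def)
qed

lemma set_integrable_ball: "set_integrable lebesgue (ball y r) (\<lambda>x. \<bar>f x\<bar>)"
  using integrable_ball[of y r] by (simp add: set_integrable_def)

lemma lint_mono_ball:
  assumes "ball z t \<subseteq> ball y s"
  shows "(LINT x:ball z t|lebesgue. \<bar>f x\<bar>) \<le> (LINT x:ball y s|lebesgue. \<bar>f x\<bar>)"
  unfolding set_lebesgue_integral_def
  using integrable_ball assms
  by (intro integral_mono) (auto simp: indicator_def)

end

lemma measure_ball_leb: "0 \<le> r \<Longrightarrow> measure lebesgue (ball (c::'a::euclidean_space) r) = unit_ball_vol DIM('a) * r ^ DIM('a)"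
  using content_ball by auto

lemma avg_bound:
  fixes f :: "'a::euclidean_space \<Rightarrow> real" and p :: real
  assumes fm: "f \<in> borel_measurable lebesgue" and fi: "integrable lebesgue (\<lambda>x. \<bar>f x\<bar> powr p)"
    and p1: "1 \<le> p" and r: "0 < r"
  shows "avg f y r \<le> r powr (- real DIM('a) / p) * (1 + (LINT x|lebesgue. \<bar>f x\<bar> powr p) / unit_ball_vol DIM('a))"
proof -
  define d where "d = real DIM('a)"
  define \<omega> where "\<omega> = unit_ball_vol d"
  define N where "N = (LINT x|lebesgue. \<bar>f x\<bar> powr p)"
  define \<tau> where "\<tau> = r powr (- d / p)"
  define m where "m = measure lebesgue (ball y r)"
  have \<omega>: "0 < \<omega>" unfolding \<omega>_def d_def by simp
  have m: "m = \<omega> * r powr d"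
  proof -
    have "m = unit_ball_vol DIM('a) * r ^ DIM('a)" unfolding m_def using r by (intro measure_ball_leb) simp
    thus ?thesis unfolding \<omega>_def d_def using r by (simp add: powr_realpow)
  qed
  have mpos: "0 < m" using m \<omega> r by simp
  have \<tau>: "0 < \<tau>" unfolding \<tau>_def using r by simp
  have bs: "ball y r \<in> sets lebesgue" using lmeasurable_ball by (rule fmeasurableD)
  have bfin: "emeasure lebesgue (ball y r) < \<infinity>"
  proof -
    have "emeasure lborel (ball y r) < \<infinity>" by (rule emeasure_bounded_finite) simp
    thus ?thesis by simp
  qed
  have int1: "integrable lebesgue (\<lambda>x. \<tau> * indicator (ball y r) x + \<tau> powr (1 - p) * \<bar>f x\<bar> powr p)"
    using bs bfin fi by (intro Bochner_Integration.integrable_add integrable_mult_right integrable_real_indicator) auto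
  have "(LINT x:ball y r|lebesgue. \<bar>f x\<bar>) = (LINT x|lebesgue. indicator (ball y r) x * \<bar>f x\<bar>)"
    by (simp add: set_lebesgue_integral_def)
  also have "\<dots> \<le> (LINT x|lebesgue. \<tau> * indicator (ball y r) x + \<tau> powr (1 - p) * \<bar>f x\<bar> powr p)"
  proof (rule integral_mono[OF integrable_ball[OF fm fi p1] int1])
    fix x
    show "indicator (ball y r) x * \<bar>f x\<bar> \<le> \<tau> * indicator (ball y r) x + \<tau> powr (1 - p) * \<bar>f x\<bar> powr p"
      using ptwise[OF \<tau> p1, of "\<bar>f x\<bar>"] by (auto simp: indicator_def)
  qed
  also have "\<dots> = \<tau> * m + \<tau> powr (1 - p) * N"
    using bs bfin fi unfolding m_def N_def
    by (subst Bochner_Integration.integral_add) (auto intro: integrable_real_indicator)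
  finally have I: "(LINT x:ball y r|lebesgue. \<bar>f x\<bar>) \<le> \<tau> * m + \<tau> powr (1 - p) * N" .
  have "avg f y r \<le> (\<tau> * m + \<tau> powr (1 - p) * N) / m"
    unfolding avg_def m_def[symmetric] using I mpos by (simp add: divide_right_mono)
  also have "\<dots> = \<tau> + (\<tau> powr (1 - p) / r powr d) * N / \<omega>"
    using mpos \<omega> r unfolding m by (simp add: field_simps)
  also have "\<tau> powr (1 - p) / r powr d = \<tau>"
  proof -
    have "\<tau> powr (1 - p) = r powr (- d / p * (1 - p))" unfolding \<tau>_def by (simp add: powr_powr)
    also have "- d / p * (1 - p) = d + (- d / p)" using p1 by (simp add: field_simps)
    finally have e1: "\<tau> powr (1 - p) = r powr (d + (- d / p))" .
    have "\<tau> powr (1 - p) / r powr d = r powr (d + (- d / p) - d)" unfolding e1 by (rule powr_diff[symmetric])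
    also have "d + (- d / p) - d = - d / p" by simp
    finally show ?thesis unfolding \<tau>_def .
  qed
  finally show ?thesis unfolding \<tau>_def N_def \<omega>_def d_def by (simp add: field_simps)
qed

lemma avg_eq:
  assumes "0 < r"
  shows "avg f (y::'a::euclidean_space) r = (LINT x:ball y r|lebesgue. \<bar>f x\<bar>) / (unit_ball_vol DIM('a) * r powr DIM('a))"
  unfolding avg_def using assms by (simp add: content_ball powr_realpow)

lemma compare:
  fixes f :: "'a::euclidean_space \<Rightarrow> real" and p \<alpha> c1 c2 r t :: real and y z :: 'a
  assumes fm: "f \<in> borel_measurable lebesgue" and fi: "integrable lebesgue (\<lambda>x. \<bar>f x\<bar> powr p)"
    and p1: "1 \<le> p" and \<alpha>: "0 < \<alpha>" "\<alpha> < real DIM('a)" and c1: "2 \<le> c1" and c2: "1 \<le> c2"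
    and maxB: "\<And>s. r < s \<Longrightarrow> s powr \<alpha> * avg f y s \<le> r powr \<alpha> * avg f y r"
    and r: "0 < r" and t: "0 < t" and rt: "r \<le> 2 * t"
    and inter: "ball y (c1 * r) \<inter> ball z (c1 * t) \<noteq> {}"
    and ratio: "avg f z t / avg f y r \<in> {1 / c2 <..< c2}" and avgB: "0 < avg f y r"
  shows "ball y r \<subseteq> ball z ((3 * c1 + 2) * t)"
    and "t < (c2 * (3 * c1 + 2) powr (real DIM('a) - \<alpha>)) powr (1 / \<alpha>) * r"
    and "avg f y r / c2 < avg f z t"
proof -
  define M where "M = 3 * c1 + 2"
  define d where "d = real DIM('a)"
  define \<omega> where "\<omega> = unit_ball_vol d"
  have \<omega>: "0 < \<omega>" unfolding \<omega>_def d_def by simp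
  obtain w where w: "dist y w < c1 * r" "dist z w < c1 * t" using inter by auto
  show "ball y r \<subseteq> ball z ((3 * c1 + 2) * t)"
  proof
    fix u assume "u \<in> ball y r"
    hence "dist y u < r" by simp
    hence "dist z u < c1 * t + c1 * r + r" using w dist_triangle[of z u w] dist_triangle[of w u y]
      by (simp add: dist_commute)
    also have "\<dots> \<le> (3 * c1 + 2) * t"
    proof -
      have "c1 * r \<le> c1 * (2 * t)" using rt c1 by (intro mult_left_mono) auto
      thus ?thesis using rt by (simp add: algebra_simps)
    qed
    finally show "u \<in> ball z ((3 * c1 + 2) * t)" by simp
  qed
  show AB: "avg f y r / c2 < avg f z t"
  proof -
    have "1 / c2 < avg f z t / avg f y r" using ratio by simp
    thus ?thesis using avgB c2 by (simp add: field_simps)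
  qed
  define s where "s = c1 * r + c1 * t + t"
  have c1r: "c1 * r \<le> c1 * (2 * t)" using rt c1 by (intro mult_left_mono) auto
  have c1r2: "2 * r \<le> c1 * r" using c1 r by (intro mult_right_mono) auto
  have c1t: "0 \<le> c1 * t" using c1 t by simp
  have rs: "r < s" unfolding s_def using c1r2 c1t r t by linarith
  have sM: "s \<le> M * t"
  proof -
    have e: "M * t = 3 * (c1 * t) + 2 * t" unfolding M_def by (simp add: algebra_simps)
    have "c1 * r \<le> 2 * (c1 * t)" using c1r by (simp add: algebra_simps)
    thus ?thesis unfolding s_def e using t by linarith
  qed
  have s0: "0 < s" using rs r by simp
  have sub: "ball z t \<subseteq> ball y s"
  proof
    fix u assume "u \<in> ball z t"
    hence "dist z u < t" by simp
    hence "dist y u < c1 * r + c1 * t + t" using w dist_triangle[of y u w] dist_triangle[of w u z]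
      by (simp add: dist_commute)
    thus "u \<in> ball y s" unfolding s_def by simp
  qed
  have IA: "avg f z t * (\<omega> * t powr d) \<le> avg f y s * (\<omega> * s powr d)"
    using lint_mono_ball[OF fm fi p1 sub] t s0 \<omega> unfolding avg_eq[OF t] avg_eq[OF s0] \<omega>_def d_def
    by simp
  hence IA': "avg f z t * t powr d \<le> avg f y s * s powr d" using \<omega> by (simp add: mult.left_commute)
  have "avg f y s * s powr d = s powr (d - \<alpha>) * (s powr \<alpha> * avg f y s)"
    using s0 by (simp add: powr_diff)
  also have "\<dots> \<le> s powr (d - \<alpha>) * (r powr \<alpha> * avg f y r)"
    using maxB[OF rs] by (intro mult_left_mono) auto
  also have "\<dots> \<le> (M * t) powr (d - \<alpha>) * (r powr \<alpha> * avg f y r)"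
    using sM s0 \<alpha> avgB unfolding d_def by (intro mult_right_mono powr_mono2) auto
  finally have "avg f z t * t powr d \<le> (M * t) powr (d - \<alpha>) * (r powr \<alpha> * avg f y r)"
    using IA' by linarith
  moreover have "avg f y r / c2 * t powr d < avg f z t * t powr d" using t by (intro mult_strict_right_mono[OF AB]) auto
  ultimately have "avg f y r / c2 * t powr d < (M * t) powr (d - \<alpha>) * (r powr \<alpha> * avg f y r)" by linarith
  hence "t powr d < c2 * (M * t) powr (d - \<alpha>) * r powr \<alpha>" using avgB c2 by (simp add: field_simps)
  also have "\<dots> = (c2 * M powr (d - \<alpha>) * r powr \<alpha>) * t powr (d - \<alpha>)"
    using t c1 unfolding M_def by (simp add: powr_mult)
  finally have "t powr (d - \<alpha>) * t powr \<alpha> < (c2 * M powr (d - \<alpha>) * r powr \<alpha>) * t powr (d - \<alpha>)"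
    using t by (simp add: powr_add[symmetric])
  hence tal: "t powr \<alpha> < c2 * M powr (d - \<alpha>) * r powr \<alpha>" using t by simp
  have "t = (t powr \<alpha>) powr (1 / \<alpha>)" using t \<alpha> by (simp add: powr_powr)
  also have "\<dots> < (c2 * M powr (d - \<alpha>) * r powr \<alpha>) powr (1 / \<alpha>)"
    using tal t \<alpha> by (intro powr_less_mono2) auto
  also have "\<dots> = (c2 * M powr (d - \<alpha>)) powr (1 / \<alpha>) * r"
    using r \<alpha> c2 c1 unfolding M_def by (simp add: powr_mult powr_powr)
  finally show "t < (c2 * (3 * c1 + 2) powr (real DIM('a) - \<alpha>)) powr (1 / \<alpha>) * r"
    unfolding M_def d_def .
qed

lemma level_lemma:
  fixes g r t K :: real
  assumes r: "0 < r" and rt: "r \<le> 2 * t" and tK: "t \<le> K * r" and K: "0 < K"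
  shows "min ((1/2) powr g) (K powr g) * r powr g \<le> t powr g"
proof (cases "0 \<le> g")
  case True
  have "min ((1/2) powr g) (K powr g) * r powr g \<le> (1/2) powr g * r powr g"
    by (intro mult_right_mono) auto
  also have "\<dots> = (r / 2) powr g" using r by (simp add: powr_mult powr_divide)
  also have "\<dots> \<le> t powr g" using True r rt by (intro powr_mono2) auto
  finally show ?thesis .
next
  case False
  have "min ((1/2) powr g) (K powr g) * r powr g \<le> K powr g * r powr g"
    by (intro mult_right_mono) auto
  also have "\<dots> = (K * r) powr g" using r K by (simp add: powr_mult)
  also have "\<dots> \<le> t powr g" using False r rt tK by (intro powr_mono2') auto
  finally show ?thesis .
qed

lemma meas_piece: "(\<lambda>t::real. ennreal (t powr (q-1)) * indicator {\<epsilon>..} t * indicator {t. \<kappa>*t < L} t * ennreal V) \<in> borel_measurable lborel"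
  by measurable

lemma int_piece:
  fixes \<kappa> \<epsilon> L V q :: real
  assumes "0 < \<kappa>" "0 < \<epsilon>" "0 < L" "0 \<le> V" "1 \<le> q"
  shows "(\<integral>\<^sup>+ t. ennreal (t powr (q-1)) * indicator {\<epsilon>..} t * indicator {t. \<kappa>*t < L} t * ennreal V \<partial>lborel)
          \<le> ennreal (V * (L / \<kappa>) powr q)"
proof -
  have "(\<integral>\<^sup>+ t. ennreal (t powr (q-1)) * indicator {\<epsilon>..} t * indicator {t. \<kappa>*t < L} t * ennreal V \<partial>lborel)
        \<le> (\<integral>\<^sup>+ t. ennreal (V * (L / \<kappa>) powr (q-1)) * indicator {0..L/\<kappa>} t \<partial>lborel)"
  proof (rule nn_integral_mono)
    fix t :: real
    show "ennreal (t powr (q-1)) * indicator {\<epsilon>..} t * indicator {t. \<kappa>*t < L} t * ennreal V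
          \<le> ennreal (V * (L / \<kappa>) powr (q-1)) * indicator {0..L/\<kappa>} t"
    proof (cases "\<epsilon> \<le> t \<and> \<kappa> * t < L")
      case True
      hence t0: "0 < t" and tL: "t \<le> L / \<kappa>" using assms by (auto simp: field_simps)
      have "t powr (q-1) \<le> (L / \<kappa>) powr (q-1)" using t0 tL assms by (intro powr_mono2) auto
      hence "t powr (q-1) * V \<le> V * (L / \<kappa>) powr (q-1)" using assms by (simp add: mult.commute mult_left_mono)
      hence "ennreal (t powr (q-1)) * ennreal V \<le> ennreal (V * (L / \<kappa>) powr (q-1))"
        using assms by (simp add: ennreal_mult''[symmetric])
      thus ?thesis using True t0 tL by (simp add: indicator_def)
    next
      case False
      thus ?thesis by (auto simp: indicator_def)
    qed
  qed
  also have "\<dots> = ennreal (V * (L / \<kappa>) powr (q-1)) * ennreal (L / \<kappa>)"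
    using assms by (simp add: nn_integral_cmult_indicator emeasure_lborel_Icc)
  also have "\<dots> = ennreal (V * (L / \<kappa>) powr q)"
  proof -
    have "(L / \<kappa>) powr (q-1) * (L / \<kappa>) = (L / \<kappa>) powr q"
      using assms by (simp add: powr_diff)
    hence h2: "V * (L / \<kappa>) powr (q-1) * (L / \<kappa>) = V * (L / \<kappa>) powr q" by (metis mult.assoc)
    have "ennreal (V * (L / \<kappa>) powr (q-1)) * ennreal (L / \<kappa>) = ennreal (V * (L / \<kappa>) powr (q-1) * (L / \<kappa>))"
      using assms by (intro ennreal_mult''[symmetric]) auto
    thus ?thesis using h2 by simp
  qed
  finally show ?thesis .
qed

lemma ennsum: "(f :: 'b \<Rightarrow> ennreal) summable_on S"
  by (rule nonneg_summable_on_complete) simp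

lemma infsum_cmult_ennreal:
  fixes f :: "'b \<Rightarrow> ennreal"
  shows "infsum (\<lambda>g. k * f g) G = k * infsum f G"
proof -
  have "infsum (\<lambda>g. k * f g) G = (SUP F\<in>{F. finite F \<and> F \<subseteq> G}. sum (\<lambda>g. k * f g) F)"
    by (rule nonneg_infsum_complete) simp
  also have "\<dots> = (SUP F\<in>{F. finite F \<and> F \<subseteq> G}. k * sum f F)"
    by (simp add: sum_distrib_left)
  also have "\<dots> = k * (SUP F\<in>{F. finite F \<and> F \<subseteq> G}. sum f F)"
    by (rule SUP_mult_left_ennreal[symmetric])
  also have "(SUP F\<in>{F. finite F \<and> F \<subseteq> G}. sum f F) = infsum f G"
    by (rule nonneg_infsum_complete[symmetric]) simp
  finally show ?thesis .
qed

lemma fin_le_infsum: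
  fixes f :: "'b \<Rightarrow> ennreal"
  assumes "finite F" "F \<subseteq> G"
  shows "sum f F \<le> infsum f G"
  using assms by (subst nonneg_infsum_complete) (auto intro!: SUP_upper)

lemma finite_level:
  fixes a :: "'b \<Rightarrow> real"
  assumes fin: "infsum (\<lambda>g. ennreal (a g)) G \<noteq> \<infinity>" and c: "0 < c"
  shows "finite {g\<in>G. c < a g}"
proof (rule ccontr)
  assume inf: "infinite {g\<in>G. c < a g}"
  define S where "S = infsum (\<lambda>g. ennreal (a g)) G"
  define Sr where "Sr = enn2real S"
  have SSr: "S = ennreal Sr" unfolding Sr_def using fin S_def by (simp add: ennreal_enn2real_if)
  define n where "n = nat \<lceil>Sr / c\<rceil> + 1"
  have ncbig: "Sr < real n * c"
  proof -
    have "Sr / c \<le> real (nat \<lceil>Sr / c\<rceil>)" by linarith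
    hence "Sr / c < real n" unfolding n_def by simp
    thus ?thesis using c by (simp add: field_simps)
  qed
  obtain F where F: "F \<subseteq> {g\<in>G. c < a g}" "finite F" "card F = n"
    using infinite_arbitrarily_large[OF inf] by blast
  have "ennreal (real n * c) = (\<Sum>g\<in>F. ennreal c)" using F c by (simp add: ennreal_of_nat_eq_real_of_nat ennreal_mult)
  also have "\<dots> \<le> (\<Sum>g\<in>F. ennreal (a g))" by (intro sum_mono ennreal_leI) (use F in auto)
  also have "\<dots> \<le> S" unfolding S_def using F by (intro fin_le_infsum) auto
  finally have "ennreal (real n * c) \<le> ennreal Sr" using SSr by simp
  hence "real n * c \<le> Sr" using ennreal_le_iff[of Sr "real n * c"] Sr_def by simp
  thus False using ncbig by simp
qed

lemma infsum_pow_bound: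
  fixes a :: "'b \<Rightarrow> real" and C e :: real
  assumes pos: "\<And>g. g \<in> G \<Longrightarrow> 0 < a g" and e: "1 \<le> e" and C: "0 \<le> C"
    and fin: "infsum (\<lambda>g. ennreal (a g)) G \<noteq> \<infinity>"
  shows "infsum (\<lambda>g. ennreal (C * a g powr e)) G \<le> ennreal (C * enn2real (infsum (\<lambda>g. ennreal (a g)) G) powr e)"
proof -
  define S where "S = infsum (\<lambda>g. ennreal (a g)) G"
  define Sr where "Sr = enn2real S"
  have SSr: "S = ennreal Sr" unfolding Sr_def using fin S_def by (simp add: ennreal_enn2real_if)
  have Sr0: "0 \<le> Sr" unfolding Sr_def by simp
  have single: "a g \<le> Sr" if g: "g \<in> G" for g
  proof -
    have "ennreal (a g) = sum (\<lambda>g. ennreal (a g)) {g}" by simp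
    also have "\<dots> \<le> S" unfolding S_def using g by (intro fin_le_infsum) auto
    finally show ?thesis using SSr Sr0 by simp
  qed
  have "infsum (\<lambda>g. ennreal (C * a g powr e)) G \<le> infsum (\<lambda>g. ennreal (C * Sr powr (e - 1)) * ennreal (a g)) G"
  proof (rule infsum_mono)
    fix g assume g: "g \<in> G"
    have "a g powr e = a g powr (e - 1) * a g" using pos[OF g] by (simp add: powr_diff)
    also have "\<dots> \<le> Sr powr (e - 1) * a g"
      using pos[OF g] single[OF g] e by (intro mult_right_mono powr_mono2) auto
    finally have "C * a g powr e \<le> C * Sr powr (e - 1) * a g" using C by (simp add: mult.assoc mult_left_mono)
    thus "ennreal (C * a g powr e) \<le> ennreal (C * Sr powr (e - 1)) * ennreal (a g)"
    proof -
      have "ennreal (C * Sr powr (e - 1)) * ennreal (a g) = ennreal (C * Sr powr (e - 1) * a g)"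
        by (rule ennreal_mult''[symmetric]) (use pos[OF g] in auto)
      thus ?thesis using \<open>C * a g powr e \<le> C * Sr powr (e - 1) * a g\<close> by (simp add: ennreal_leI)
    qed
  qed (rule ennsum)+
  also have "\<dots> = ennreal (C * Sr powr (e - 1)) * S"
    unfolding S_def by (rule infsum_cmult_ennreal)
  also have "\<dots> = ennreal (C * Sr powr e)"
  proof (cases "Sr = 0")
    case True thus ?thesis using SSr by simp
  next
    case False
    hence "Sr powr (e - 1) * Sr = Sr powr e" using Sr0 by (simp add: powr_diff)
    thus ?thesis using SSr Sr0 C by (simp add: ennreal_mult''[symmetric] mult.assoc)
  qed
  finally show ?thesis unfolding S_def Sr_def .
qed

lemma powr_identity:
  fixes \<omega> M r v \<kappa> d p q e a b :: real
  assumes r: "0 < r" and v: "0 < v" and M: "0 < M" and \<kappa>: "0 < \<kappa>"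
    and qpe: "q = p * e" and ex: "d + a * q = b * q"
  shows "\<omega> * (M * r) powr d * ((r powr a * v) / \<kappa>) powr q
       = \<omega> * M powr d * (1 / \<kappa>) powr q * ((r powr b * v) powr p) powr e"
proof -
  have "((r powr b * v) powr p) powr e = (r powr b * v) powr q"
    using qpe by (simp add: powr_powr)
  also have "\<dots> = r powr (b * q) * v powr q" using r v by (simp add: powr_mult powr_powr)
  finally have R: "((r powr b * v) powr p) powr e = r powr (b * q) * v powr q" .
  have "(M * r) powr d * ((r powr a * v) / \<kappa>) powr q
        = M powr d * (1 / \<kappa>) powr q * (r powr d * r powr (a * q) * v powr q)"
    using r v M \<kappa> by (simp add: powr_mult powr_divide powr_powr)
  also have "r powr d * r powr (a * q) = r powr (b * q)" using ex by (simp add: powr_add[symmetric])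
  finally show ?thesis using R by (simp add: mult.assoc mult.left_commute)
qed


theorem lemma4p1:
  fixes \<alpha> \<beta> p c1 c2 :: real
  assumes "0 < \<alpha>" "\<alpha> < real DIM('a::euclidean_space)" "1 \<le> p"
    "p < real DIM('a) / (1 + \<alpha> + \<beta>)" "2 \<le> c1" "1 \<le> c2"
  shows "\<exists>C::real. \<forall>(f::'a \<Rightarrow> real) (\<epsilon>::real) \<B>.
     \<B> \<in> {Bc \<alpha> f, Bu \<alpha> f} \<longrightarrow> f \<in> borel_measurable lebesgue \<longrightarrow>
     integrable lebesgue (\<lambda>x. \<bar>f x\<bar> powr p) \<longrightarrow> 0 < \<epsilon> \<longrightarrow>
     (\<exists>Bt \<subseteq> \<B>.
        (\<forall>x r y s. (x, r) \<in> Bt \<and> (y, s) \<in> Bt \<and> (x, r) \<noteq> (y, s) \<longrightarrow>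
            ball x (c1 * r) \<inter> ball y (c1 * s) = {} \<or> avg f y s / avg f x r \<notin> {1 / c2 <..< c2}) \<and>
        (let d = real DIM('a);
             q = 1 / (1 / p - (1 + \<alpha> + \<beta>) / d);
             e = 1 / (1 - p * (1 + \<alpha> + \<beta>) / d);
             S = (\<Sum>\<^sub>\<infinity> b\<in>Bt. ennreal ((snd b powr (d / p - 1) * avg f (fst b) (snd b)) powr p))
         in S = \<infinity> \<or>
            (\<integral>\<^sup>+ t. ennreal (t powr (q - 1)) *
                 emeasure lebesgue (\<Union>{ball x r | x r. (x, r) \<in> \<B> \<and> t < r powr (\<alpha> + \<beta>) * avg f x r})
                 * indicator {\<epsilon>..} t \<partial>lborel)
            \<le> ennreal (C * enn2real S powr e)))"
proof -
  note \<alpha> = assms(1,2) and p1 = assms(3) and c1 = assms(5) and c2 = assms(6)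
  define d where "d = real DIM('a)"
  define \<gamma> where "\<gamma> = 1 + \<alpha> + \<beta>"
  have d0: "0 < d" unfolding d_def by simp
  have \<gamma>0: "0 < \<gamma>"
  proof (rule ccontr)
    assume "\<not> 0 < \<gamma>"
    hence "d / \<gamma> \<le> 0" using d0 by (simp add: divide_nonneg_nonpos)
    thus False using assms(4) p1 unfolding d_def \<gamma>_def by simp
  qed
  have p\<gamma>: "p * \<gamma> < d" using assms(4) \<gamma>0 unfolding d_def \<gamma>_def by (simp add: less_divide_eq)
  define q where "q = 1 / (1 / p - \<gamma> / d)"
  define e where "e = 1 / (1 - p * \<gamma> / d)"
  have den: "0 < 1 - p * \<gamma> / d" using p\<gamma> d0 by (simp add: field_simps)
  have den2: "0 < 1 / p - \<gamma> / d" using p\<gamma> d0 p1 by (simp add: field_simps)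
  have qpe: "q = p * e" unfolding q_def e_def using p1 d0 den den2 by (simp add: field_simps)
  have e1: "1 \<le> e"
  proof -
    have "1 - p * \<gamma> / d \<le> 1" using p1 \<gamma>0 d0 by simp
    thus ?thesis unfolding e_def using den by (simp add: field_simps)
  qed
  have q1: "1 \<le> q" unfolding qpe using p1 e1 by (metis mult_mono' mult_1 zero_le_one)
  have qex: "d + (\<alpha> + \<beta>) * q = (d / p - 1) * q"
  proof -
    have h: "d / p - \<gamma> = d * (1 / p - \<gamma> / d)" using d0 by (simp add: field_simps)
    have "(d / p - 1) * q - (\<alpha> + \<beta>) * q = (d / p - \<gamma>) * q" unfolding \<gamma>_def by (simp add: algebra_simps)
    also have "\<dots> = d" unfolding h q_def using den2 by simp
    finally show ?thesis by simp
  qed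
  define M where "M = 3 * c1 + 2"
  have M0: "1 \<le> M" unfolding M_def using c1 by simp
  define K where "K = (c2 * M powr (d - \<alpha>)) powr (1 / \<alpha>)"
  have K0: "0 < K" unfolding K_def using c2 M0 by simp
  define \<kappa> where "\<kappa> = min 1 (min ((1/2) powr (\<alpha> + \<beta>)) (K powr (\<alpha> + \<beta>)) / c2)"
  have \<kappa>0: "0 < \<kappa>" unfolding \<kappa>_def using c2 K0 by simp
  have \<kappa>1: "\<kappa> \<le> 1" unfolding \<kappa>_def by simp
  define \<omega> where "\<omega> = unit_ball_vol d"
  have \<omega>0: "0 < \<omega>" unfolding \<omega>_def d_def by simp
  define C where "C = \<omega> * M powr d * (1 / \<kappa>) powr q"
  have C0: "0 \<le> C" unfolding C_def using \<omega>0 by simp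
  show ?thesis
  proof (rule exI[of _ C], intro allI impI)
    fix f :: "'a \<Rightarrow> real" and \<epsilon> :: real and \<B>
    assume Bin: "\<B> \<in> {Bc \<alpha> f, Bu \<alpha> f}" and fm: "f \<in> borel_measurable lebesgue"
      and fi: "integrable lebesgue (\<lambda>x. \<bar>f x\<bar> powr p)" and \<epsilon>: "0 < \<epsilon>"
    have Bor: "b \<in> \<B> \<Longrightarrow> b \<in> Bc \<alpha> f \<or> b \<in> Bu \<alpha> f" for b using Bin by auto
    have Bmax: "\<And>b s. b \<in> \<B> \<Longrightarrow> snd b < s \<Longrightarrow> s powr \<alpha> * avg f (fst b) s \<le> snd b powr \<alpha> * avg f (fst b) (snd b)"
      using maxprop(2) Bor by blast
    have Bpos: "0 < snd b" if "b \<in> \<B>" for b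
      using maxprop(1)[OF Bor[OF that], of "snd b + 1"] by simp
    define lev where "lev b = snd b powr (\<alpha> + \<beta>) * avg f (fst b) (snd b)" for b
    define F where "F = {b\<in>\<B>. \<epsilon> < lev b}"
    have FB: "F \<subseteq> \<B>" unfolding F_def by auto
    have avgpos: "0 < avg f (fst b) (snd b)" if "b \<in> F" for b
    proof -
      have "0 < lev b" using that \<epsilon> unfolding F_def by auto
      moreover have "0 < snd b" using Bpos[of b] that FB by blast
      hence "0 < snd b powr (\<alpha> + \<beta>)" by simp
      ultimately show ?thesis unfolding lev_def by (simp add: zero_less_mult_iff)
    qed
    define A0 where "A0 = 1 + (LINT x|lebesgue. \<bar>f x\<bar> powr p) / \<omega>"
    have A0: "0 < A0"
    proof -
      have "0 \<le> (LINT x|lebesgue. \<bar>f x\<bar> powr p)" by simp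
      thus ?thesis unfolding A0_def using \<omega>0 by (simp add: add_pos_nonneg)
    qed
    define \<delta> where "\<delta> = \<alpha> + \<beta> - d / p"
    have \<delta>0: "\<delta> < 0"
    proof -
      have "\<gamma> < d / p" using p\<gamma> p1 by (simp add: field_simps)
      thus ?thesis unfolding \<delta>_def \<gamma>_def by simp
    qed
    define R where "R = (\<epsilon> / A0) powr (1 / \<delta>)"
    have radius: "snd b \<le> R" if bF: "b \<in> F" for b
    proof -
      define r where "r = snd b"
      have r0: "0 < r" unfolding r_def using Bpos[of b] bF FB by blast
      have "\<epsilon> < lev b" using bF F_def by auto
      also have "lev b \<le> r powr (\<alpha> + \<beta>) * (r powr (- d / p) * A0)"
        unfolding lev_def r_def[symmetric] A0_def \<omega>_def d_def
        using avg_bound[OF fm fi p1 r0, of "fst b"] by (intro mult_left_mono) auto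
      also have "\<dots> = r powr \<delta> * A0"
      proof -
        have e: "r powr (\<alpha> + \<beta> + - d / p) = r powr (\<alpha> + \<beta>) * r powr (- d / p)" by (rule powr_add)
        have "\<alpha> + \<beta> + - d / p = \<delta>" unfolding \<delta>_def by simp
        thus ?thesis using e by (metis mult.assoc)
      qed
      finally have "\<epsilon> / A0 < r powr \<delta>" using A0 by (simp add: field_simps)
      hence "(r powr \<delta>) powr (1 / \<delta>) < (\<epsilon> / A0) powr (1 / \<delta>)"
        using \<delta>0 \<epsilon> A0 by (intro powr_less_mono2_neg) auto
      moreover have "(r powr \<delta>) powr (1 / \<delta>) = r" using \<delta>0 r0 by (simp add: powr_powr)
      ultimately show ?thesis unfolding R_def r_def by simp
    qed
    define conf where "conf b b' \<longleftrightarrow> \<not> (ball (fst b) (c1 * snd b) \<inter> ball (fst b') (c1 * snd b') = {} \<or>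
        avg f (fst b') (snd b') / avg f (fst b) (snd b) \<notin> {1 / c2 <..< c2})" for b b'
    have sym: "conf b b' = conf b' b" if "b \<in> F" "b' \<in> F" for b b'
    proof -
      have u: "0 < avg f (fst b) (snd b)" "0 < avg f (fst b') (snd b')" using avgpos that by auto
      have "(avg f (fst b') (snd b') / avg f (fst b) (snd b) \<in> {1 / c2 <..< c2}) =
            (avg f (fst b) (snd b) / avg f (fst b') (snd b') \<in> {1 / c2 <..< c2})"
        using u c2 by (auto simp: field_simps)
      thus ?thesis unfolding conf_def by (auto simp: Int_commute)
    qed
    have Fpos: "0 < snd b" if "b \<in> F" for b using Bpos FB that by blast
    obtain G where GF: "G \<subseteq> F" and Gp: "\<forall>g\<in>G. \<forall>g'\<in>G. g \<noteq> g' \<longrightarrow> \<not> conf g g'"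
      and Gc: "\<forall>b\<in>F. \<exists>g\<in>G. (g = b \<or> conf b g) \<and> snd b \<le> 2 * snd g"
      using select_family[of F snd R conf] Fpos radius sym by blast
    have cover: "\<exists>g\<in>G. ball (fst b) (snd b) \<subseteq> ball (fst g) (M * snd g) \<and> \<kappa> * lev b \<le> lev g"
      if bF: "b \<in> F" for b
    proof -
      obtain g where gG: "g \<in> G" and gc: "g = b \<or> conf b g" and rg: "snd b \<le> 2 * snd g"
        using Gc bF by blast
      have gF: "g \<in> F" using gG GF by auto
      show ?thesis
      proof (rule bexI[OF _ gG])
        show "ball (fst b) (snd b) \<subseteq> ball (fst g) (M * snd g) \<and> \<kappa> * lev b \<le> lev g"
          using gc
        proof
          assume "g = b"
          moreover have "snd b \<le> M * snd b" using M0 Fpos[OF bF] by simp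
          moreover have "\<kappa> * lev b \<le> lev b" using \<kappa>1 bF \<epsilon> unfolding F_def by (simp add: mult_left_le_one_le)
          ultimately show ?thesis by (auto intro: subset_ball)
        next
          assume cbg: "conf b g"
          hence inter: "ball (fst b) (c1 * snd b) \<inter> ball (fst g) (c1 * snd g) \<noteq> {}"
            and ratio: "avg f (fst g) (snd g) / avg f (fst b) (snd b) \<in> {1 / c2 <..< c2}"
            unfolding conf_def by auto
          have bB: "b \<in> \<B>" using bF FB by blast
          note cmp = compare[OF fm fi p1 \<alpha> c1 c2 Bmax[OF bB] Fpos[OF bF] Fpos[OF gF] rg inter ratio avgpos[OF bF]]
          have "ball (fst b) (snd b) \<subseteq> ball (fst g) (M * snd g)" using cmp(1) unfolding M_def .
          moreover have "\<kappa> * lev b \<le> lev g"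
          proof -
            have tK: "snd g \<le> K * snd b" using cmp(2) unfolding K_def M_def d_def by simp
            have lv: "min ((1/2) powr (\<alpha> + \<beta>)) (K powr (\<alpha> + \<beta>)) * snd b powr (\<alpha> + \<beta>) \<le> snd g powr (\<alpha> + \<beta>)"
              by (rule level_lemma[OF Fpos[OF bF] rg tK K0])
            define mm where "mm = min ((1/2) powr (\<alpha> + \<beta>)) (K powr (\<alpha> + \<beta>))"
            have mm0: "0 < mm" unfolding mm_def using K0 by simp
            have "\<kappa> * lev b \<le> (mm / c2) * lev b"
              unfolding \<kappa>_def mm_def[symmetric] using bF \<epsilon> unfolding F_def by (intro mult_right_mono) auto
            also have "\<dots> = (mm * snd b powr (\<alpha> + \<beta>)) * (avg f (fst b) (snd b) / c2)"
              unfolding lev_def by simp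
            also have "\<dots> \<le> snd g powr (\<alpha> + \<beta>) * avg f (fst g) (snd g)"
              using lv cmp(3) avgpos[OF bF] mm0 Fpos[OF bF] c2 unfolding mm_def[symmetric]
              by (intro mult_mono) auto
            finally show ?thesis unfolding lev_def .
          qed
          ultimately show ?thesis by simp
        qed
      qed
    qed
    show "\<exists>Bt \<subseteq> \<B>.
        (\<forall>x r y s. (x, r) \<in> Bt \<and> (y, s) \<in> Bt \<and> (x, r) \<noteq> (y, s) \<longrightarrow>
            ball x (c1 * r) \<inter> ball y (c1 * s) = {} \<or> avg f y s / avg f x r \<notin> {1 / c2 <..< c2}) \<and>
        (let d = real DIM('a);
             q = 1 / (1 / p - (1 + \<alpha> + \<beta>) / d);
             e = 1 / (1 - p * (1 + \<alpha> + \<beta>) / d);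
             S = (\<Sum>\<^sub>\<infinity> b\<in>Bt. ennreal ((snd b powr (d / p - 1) * avg f (fst b) (snd b)) powr p))
         in S = \<infinity> \<or>
            (\<integral>\<^sup>+ t. ennreal (t powr (q - 1)) *
                 emeasure lebesgue (\<Union>{ball x r | x r. (x, r) \<in> \<B> \<and> t < r powr (\<alpha> + \<beta>) * avg f x r})
                 * indicator {\<epsilon>..} t \<partial>lborel)
            \<le> ennreal (C * enn2real S powr e))"
    proof (rule exI[of _ G], intro conjI)
      show "G \<subseteq> \<B>" using GF FB by auto
      show "\<forall>x r y s. (x, r) \<in> G \<and> (y, s) \<in> G \<and> (x, r) \<noteq> (y, s) \<longrightarrow>
            ball x (c1 * r) \<inter> ball y (c1 * s) = {} \<or> avg f y s / avg f x r \<notin> {1 / c2 <..< c2}"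
        using Gp unfolding conf_def by fastforce
      define a where "a g = (snd g powr (d / p - 1) * avg f (fst g) (snd g)) powr p" for g
      define S where "S = (\<Sum>\<^sub>\<infinity> b\<in>G. ennreal (a b))"
      define LHS where "LHS = (\<integral>\<^sup>+ t. ennreal (t powr (q - 1)) *
                 emeasure lebesgue (\<Union>{ball x r | x r. (x, r) \<in> \<B> \<and> t < r powr (\<alpha> + \<beta>) * avg f x r})
                 * indicator {\<epsilon>..} t \<partial>lborel)"
      have main: "S = \<infinity> \<or> LHS \<le> ennreal (C * enn2real S powr e)"
      proof (cases "S = \<infinity>")
        case True thus ?thesis by simp
      next
        case Sfin: False
        have apos: "0 < a g" if gG: "g \<in> G" for g
        proof -
          have gF: "g \<in> F" using GF gG by blast
          have "0 < snd g" "0 < avg f (fst g) (snd g)" using Fpos[OF gF] avgpos[OF gF] by auto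
          thus ?thesis unfolding a_def by simp
        qed
        define Gn where "Gn n = {g\<in>G. 1 / real (Suc n) < a g}" for n
        have Gnfin: "finite (Gn n)" for n
          unfolding Gn_def by (rule finite_level) (use Sfin S_def in auto)
        have GnG: "Gn n \<subseteq> G" for n unfolding Gn_def by auto
        have Gninc: "Gn m \<subseteq> Gn n" if "m \<le> n" for m n
        proof -
          have "1 / real (Suc n) \<le> 1 / real (Suc m)" using that by (simp add: frac_le)
          thus ?thesis unfolding Gn_def by auto
        qed
        have GU: "\<exists>n. g \<in> Gn n" if gG: "g \<in> G" for g
        proof -
          obtain n where "inverse (real (Suc n)) < a g" using reals_Archimedean[OF apos[OF gG]] by blast
          thus ?thesis unfolding Gn_def using gG by (auto simp: inverse_eq_divide)
        qed
        define vol where "vol g = \<omega> * (M * snd g) powr d" for g :: "'a \<times> real"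
        have bsets: "ball c r \<in> sets lebesgue" for c :: 'a and r using lmeasurable_ball by (rule fmeasurableD)
        have emb: "emeasure lebesgue (ball (fst g) (M * snd g)) = ennreal (vol g)" if gG: "g \<in> G" for g
        proof -
          have gF: "g \<in> F" using GF gG by blast
          have r0: "0 < M * snd g" using M0 Fpos[OF gF] by simp
          have "emeasure lborel (ball (fst g) (M * snd g)) < \<infinity>" by (rule emeasure_bounded_finite) simp
          hence "emeasure lebesgue (ball (fst g) (M * snd g)) \<noteq> top" by simp
          hence "emeasure lebesgue (ball (fst g) (M * snd g)) = ennreal (measure lebesgue (ball (fst g) (M * snd g)))"
            by (rule emeasure_eq_ennreal_measure)
          also have "measure lebesgue (ball (fst g) (M * snd g)) = vol g"
            unfolding vol_def \<omega>_def d_def using r0 by (simp add: content_ball powr_realpow)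
          finally show ?thesis .
        qed
        define E where "E t = \<Union>{ball x r | x r. (x, r) \<in> \<B> \<and> t < r powr (\<alpha> + \<beta>) * avg f x r}" for t
        define U where "U g t = (if \<kappa> * t < lev g then ball (fst g) (M * snd g) else {})" for g t
        define Z where "Z n t = (\<Sum>g\<in>Gn n. indicator {t. \<kappa> * t < lev g} t * ennreal (vol g))" for n t
        define Y where "Y n t = ennreal (t powr (q - 1)) * indicator {\<epsilon>..} t * Z n t" for n t
        have Usets: "U g t \<in> sets lebesgue" for g t unfolding U_def using bsets by auto
        have UNs: "(\<Union>g\<in>Gn n. U g t) \<in> sets lebesgue" for n t
          by (rule sets.finite_UN[OF Gnfin]) (rule Usets)
        have UNs2: "(\<Union>n. \<Union>g\<in>Gn n. U g t) \<in> sets lebesgue" for t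
          by (rule sets.countable_UN) (use UNs in auto)
        have pw: "ennreal (t powr (q - 1)) * emeasure lebesgue (E t) * indicator {\<epsilon>..} t \<le> (SUP n. Y n t)" for t
        proof (cases "\<epsilon> \<le> t")
          case False thus ?thesis by simp
        next
          case True
          have sub: "E t \<subseteq> (\<Union>n. \<Union>g\<in>Gn n. U g t)"
          proof
            fix u assume "u \<in> E t"
            then obtain x r where xr: "(x, r) \<in> \<B>" "t < r powr (\<alpha> + \<beta>) * avg f x r" "u \<in> ball x r"
              unfolding E_def by blast
            have bF: "(x, r) \<in> F" unfolding F_def lev_def using xr True by auto
            obtain g where gG: "g \<in> G" and gb: "ball x r \<subseteq> ball (fst g) (M * snd g)" and gl: "\<kappa> * lev (x, r) \<le> lev g"
              using cover[OF bF] by auto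
            have "\<kappa> * t < \<kappa> * lev (x, r)" using xr \<kappa>0 unfolding lev_def by simp
            hence "\<kappa> * t < lev g" using gl by simp
            hence "u \<in> U g t" unfolding U_def using gb xr by auto
            moreover obtain n where "g \<in> Gn n" using GU[OF gG] by blast
            ultimately show "u \<in> (\<Union>n. \<Union>g\<in>Gn n. U g t)" by blast
          qed
          have "emeasure lebesgue (E t) \<le> emeasure lebesgue (\<Union>n. \<Union>g\<in>Gn n. U g t)"
            by (rule emeasure_mono[OF sub UNs2])
          also have "\<dots> = (SUP n. emeasure lebesgue (\<Union>g\<in>Gn n. U g t))"
          proof (rule SUP_emeasure_incseq[symmetric])
            show "range (\<lambda>n. \<Union>g\<in>Gn n. U g t) \<subseteq> sets lebesgue" using UNs by auto
            show "incseq (\<lambda>n. \<Union>g\<in>Gn n. U g t)" unfolding incseq_def using Gninc by blast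
          qed
          also have "\<dots> \<le> (SUP n. Z n t)"
          proof (rule SUP_mono)
            fix n
            have "emeasure lebesgue (\<Union>g\<in>Gn n. U g t) \<le> (\<Sum>g\<in>Gn n. emeasure lebesgue (U g t))"
              by (rule emeasure_subadditive_finite) (use Gnfin Usets in auto)
            also have "\<dots> = Z n t"
              unfolding Z_def U_def using emb GnG by (intro sum.cong) (auto simp: indicator_def)
            finally show "\<exists>m\<in>UNIV. emeasure lebesgue (\<Union>g\<in>Gn n. U g t) \<le> Z m t" by blast
          qed
          finally have "ennreal (t powr (q - 1)) * emeasure lebesgue (E t) \<le> ennreal (t powr (q - 1)) * (SUP n. Z n t)"
            by (rule mult_left_mono) simp
          also have "\<dots> = (SUP n. Y n t)"
            unfolding Y_def using True by (simp add: SUP_mult_left_ennreal)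
          finally show ?thesis using True by simp
        qed
        have Ysum: "Y n t = (\<Sum>g\<in>Gn n. ennreal (t powr (q - 1)) * indicator {\<epsilon>..} t * indicator {t. \<kappa> * t < lev g} t * ennreal (vol g))" for n t
          unfolding Y_def Z_def by (simp add: sum_distrib_left mult.assoc)
        have Ymeas: "Y n \<in> borel_measurable lborel" for n
          unfolding Ysum by (intro borel_measurable_sum meas_piece)
        have Yinc: "incseq Y"
        proof (rule incseq_SucI, rule le_funI)
          fix n t
          have "Z n t \<le> Z (Suc n) t" unfolding Z_def
            by (rule sum_mono2) (use Gnfin Gninc in auto)
          thus "Y n t \<le> Y (Suc n) t" unfolding Y_def by (intro mult_left_mono) auto
        qed
        have LE: "LHS \<le> (\<integral>\<^sup>+ t. (SUP n. Y n t) \<partial>lborel)"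
          unfolding LHS_def E_def[symmetric] by (rule nn_integral_mono) (rule pw)
        also have "\<dots> = (SUP n. \<integral>\<^sup>+ t. Y n t \<partial>lborel)"
          by (rule nn_integral_monotone_convergence_SUP[OF Yinc Ymeas])
        also have "\<dots> \<le> (\<Sum>\<^sub>\<infinity> g\<in>G. ennreal (C * a g powr e))"
        proof (rule SUP_least)
          fix n
          have "(\<integral>\<^sup>+ t. Y n t \<partial>lborel) = (\<Sum>g\<in>Gn n. \<integral>\<^sup>+ t. ennreal (t powr (q - 1)) * indicator {\<epsilon>..} t * indicator {t. \<kappa> * t < lev g} t * ennreal (vol g) \<partial>lborel)"
            unfolding Ysum by (rule nn_integral_sum) (rule meas_piece)
          also have "\<dots> \<le> (\<Sum>g\<in>Gn n. ennreal (C * a g powr e))"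
          proof (rule sum_mono)
            fix g assume gn: "g \<in> Gn n"
            hence gG: "g \<in> G" using GnG by auto
            have gF: "g \<in> F" using GF gG by blast
            have r0: "0 < snd g" and v0: "0 < avg f (fst g) (snd g)"
              using Fpos[OF gF] avgpos[OF gF] by auto
            have lev0: "0 < lev g" using gF \<epsilon> unfolding F_def by auto
            have "(\<integral>\<^sup>+ t. ennreal (t powr (q - 1)) * indicator {\<epsilon>..} t * indicator {t. \<kappa> * t < lev g} t * ennreal (vol g) \<partial>lborel)
                  \<le> ennreal (vol g * (lev g / \<kappa>) powr q)"
              using \<kappa>0 \<epsilon> lev0 q1 \<omega>0 M0 r0 unfolding vol_def by (intro int_piece) auto
            also have "vol g * (lev g / \<kappa>) powr q = C * a g powr e"
              unfolding vol_def lev_def C_def a_def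
              by (rule powr_identity[OF r0 v0 _ \<kappa>0 qpe qex]) (use M0 in simp)
            finally show "(\<integral>\<^sup>+ t. ennreal (t powr (q - 1)) * indicator {\<epsilon>..} t * indicator {t. \<kappa> * t < lev g} t * ennreal (vol g) \<partial>lborel)
                  \<le> ennreal (C * a g powr e)" .
          qed
          also have "\<dots> \<le> (\<Sum>\<^sub>\<infinity> g\<in>G. ennreal (C * a g powr e))"
            by (rule fin_le_infsum[OF Gnfin GnG])
          finally show "(\<integral>\<^sup>+ t. Y n t \<partial>lborel) \<le> (\<Sum>\<^sub>\<infinity> g\<in>G. ennreal (C * a g powr e))" .
        qed
        also have "\<dots> \<le> ennreal (C * enn2real S powr e)"
          unfolding S_def by (rule infsum_pow_bound[OF apos e1 C0]) (use Sfin S_def in auto)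
        finally show ?thesis by simp
      qed
      thus "let d = real DIM('a);
             q = 1 / (1 / p - (1 + \<alpha> + \<beta>) / d);
             e = 1 / (1 - p * (1 + \<alpha> + \<beta>) / d);
             S = (\<Sum>\<^sub>\<infinity> b\<in>G. ennreal ((snd b powr (d / p - 1) * avg f (fst b) (snd b)) powr p))
         in S = \<infinity> \<or>
            (\<integral>\<^sup>+ t. ennreal (t powr (q - 1)) *
                 emeasure lebesgue (\<Union>{ball x r | x r. (x, r) \<in> \<B> \<and> t < r powr (\<alpha> + \<beta>) * avg f x r})
                 * indicator {\<epsilon>..} t \<partial>lborel)
            \<le> ennreal (C * enn2real S powr e)"
        unfolding Let_def S_def LHS_def a_def q_def e_def d_def \<gamma>_def .
    qed
  qed
qed

end
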